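(* Let $\mathcal{G}=(\mathcal{V},\mathcal{E})$ be an undirected connected graph with vertex set $\mathcal{V}=\{1,\dots,m\}$, let $\mathcal{X}\subseteq\mathbb{R}^n$ be a closed convex set, and consider the problem $$\min_{\bm{x}=(x_1,\dots,x_m)\in\mathcal{X}^m}\ \sum_{i\in\mathcal{V}} f_i(x_i)\quad\text{subject to}\quad (P\otimes I_n)\bm{x}=\bm{x}.$$ Assume: (a) each $f_i:\mathbb{R}^n\to\mathbb{R}\cup\{+\infty\}$ is closed, proper and convex; (b) there is a pair $(\bm{x}^\star,\bm{\nu}^\star)$ such that for every $i\in\mathcal{V}$: $\sum_{j\in\mathcal{V}}P_{ij}x_j^\star=x_i^\star$, and there exists $g_i\in N_{\mathcal{X}}(x_i^\star)$ with $-\nu_i^\star+\sum_{j\in\mathcal{V}}P_{ij}\nu_j^\star-g_i\in\partial f_i(x_i^\star)$; (c) $\mathcal{D}\subseteq\mathbb{R}^n$ is an open convex set whose closure contains $\mathcal{X}$; for each $i\in\mathcal{V}$, $\varphi_i:\mathcal{D}\to\mathbb{R}$ is strictly convex (and differentiable); $\phi:\mathcal{D}\to\mathbb{R}$ is a mirror map with $B_\phi(u,v)\ge\frac{\mu}{2}\|u-v\|_p^2$ for all $u,v\in\mathcal{X}\cap\mathcal{D}$; (d) $P\in\mathbb{R}^{m\times m}$ is symmetric, stochastic, irreducible and positive semidefinite, with $P_{ij}>0$ only if $j\in\mathcal{N}(i)$. Let $\tau,\rho>0$, $\delta_1,\dots,\delta_m\ge0$, $\bm{x}^{(0)}\in\mathcal{X}^m\cap\mathcal{D}^m$,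 $\bm{\nu}^{(0)}=0$, and let $\{\bm{y}^{(t)},\bm{x}^{(t)},\bm{\nu}^{(t)}\}$ be generated by: for $t=0,1,2,\dots$ and every $i\in\mathcal{V}$, $$y_i^{(t)}=\operatorname*{argmin}_{y_i\in\mathcal{X}}\sum_{j\in\mathcal{V}}P_{ij}B_\phi(y_i,x_j^{(t)}),$$ $$x_i^{(t+1)}=\operatorname*{argmin}_{x_i\in\mathcal{X}}\ f_i(x_i)+\Big\langle x_i,\ \nu_i^{(t)}-\sum_{j\in\mathcal{V}}P_{ij}\nu_j^{(t)}\Big\rangle+\rho B_\phi(x_i,y_i^{(t)})+\delta_iB_{\varphi_i}(x_i,x_i^{(t)}),$$ $$\nu_i^{(t+1)}=\nu_i^{(t)}+\tau x_i^{(t+1)}-\tau\sum_{j\in\mathcal{V}}P_{ij}x_j^{(t+1)}.$$ Let $\sigma=\min\{1,n^{\frac{2}{p}-1}\}$, $0<\gamma<\mu\sigma$, $\tau\le\rho(\mu\sigma-\gamma)$, and $$V(0)=\frac{1}{2\tau\rho}\|\bm{\nu}^\star-\bm{\nu}^{(0)}\|_2^2+\sum_{i\in\mathcal{V}}B_\phi(x_i^\star,y_i^{(0)})+\sum_{i\in\mathcal{V}}\frac{\delta_i}{\rho}B_{\varphi_i}(x_i^\star,x_i^{(0)}).$$ For $T\ge1$ let $\bar{\bm{x}}^{(T)}=\frac1T\sum_{t=1}^T\bm{x}^{(t)}$ with blocks $\bar x_i^{(T)}$. Then $$\sum_{i\in\mathcal{V}}f_i(\bar x_i^{(T)})-\sum_{i\in\mathcal{V}}f_i(x_i^\star)\le\frac1T\Big(\rho\sum_{i\in\mathcal{V}}B_\phi(x_i^\star,y_i^{(0)})+\sum_{i\in\mathcal{V}}\delta_iB_{\varphi_i}(x_i^\star,x_i^{(0)})\Big)$$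 and $$\frac12\big\|((I_m-P)\otimes I_n)\bar{\bm{x}}^{(T)}\big\|_2^2\le\frac{V(0)}{\gamma T}.$$
   Context: $\mathcal{N}(i)$ is the set of neighbors of vertex $i$. $\bm{x}=[x_1^\top,\dots,x_m^\top]^\top\in\mathbb{R}^{mn}$; $\otimes$ is the Kronecker product. The normal cone is $N_{\mathcal{X}}(u)=\{g:\langle g,u-v\rangle\ge0\ \forall v\in\mathcal{X}\}$. A mirror map on open convex $\mathcal{D}$ is a differentiable strictly convex $\phi:\mathcal{D}\to\mathbb{R}$ whose gradient takes all values in $\mathbb{R}^n$ and whose gradient norm diverges at the boundary of the closure of $\mathcal{D}$. $B_\psi(u,v)=\psi(u)-\psi(v)-\langle\nabla\psi(v),u-v\rangle$ is the Bregman divergence. Stochastic means nonnegative entries with row sums 1. *)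

theory Defs
  imports "HOL-Analysis.Analysis" "HOL-Library.Extended_Real"
begin

definition strictly_convex_on :: "'a::real_vector set \<Rightarrow> ('a \<Rightarrow> real) \<Rightarrow> bool" where
  "strictly_convex_on S f \<longleftrightarrow>
     (\<forall>x\<in>S. \<forall>y\<in>S. \<forall>t::real. x \<noteq> y \<and> 0 < t \<and> t < 1 \<longrightarrow>
        f ((1 - t) *\<^sub>R x + t *\<^sub>R y) < (1 - t) * f x + t * f y)"

definition grad :: "(real^'n \<Rightarrow> real) \<Rightarrow> real^'n \<Rightarrow> real^'n" where
  "grad \<psi> v = (THE g. (\<psi> has_derivative (\<lambda>h. g \<bullet> h)) (at v))"

definition bregman :: "(real^'n \<Rightarrow> real) \<Rightarrow> real^'n \<Rightarrow> real^'n \<Rightarrow> real" where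
  "bregman \<psi> u v = \<psi> u - \<psi> v - grad \<psi> v \<bullet> (u - v)"

definition mirror_map :: "(real^'n) set \<Rightarrow> (real^'n \<Rightarrow> real) \<Rightarrow> bool" where
  "mirror_map D \<phi> \<longleftrightarrow> open D \<and> convex D \<and>
     (\<forall>x\<in>D. \<phi> differentiable (at x)) \<and> strictly_convex_on D \<phi> \<and>
     (\<forall>g. \<exists>x\<in>D. grad \<phi> x = g) \<and>
     (\<forall>z\<in>frontier (closure D).
        filterlim (\<lambda>x. norm (grad \<phi> x)) at_top (at z within D))"

definition pnorm :: "real \<Rightarrow> real^'n \<Rightarrow> real" where
  "pnorm p u = (\<Sum>k\<in>UNIV. \<bar>u $ k\<bar> powr p) powr (1 / p)"

definition normal_cone :: "(real^'n) set \<Rightarrow> real^'n \<Rightarrow> (real^'n) set" where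
  "normal_cone X u = {g. \<forall>v\<in>X. g \<bullet> (u - v) \<ge> 0}"

definition epigraph :: "(real^'n \<Rightarrow> ereal) \<Rightarrow> ((real^'n) \<times> real) set" where
  "epigraph f = {(x, r). f x \<le> ereal r}"

definition proper_fun :: "(real^'n \<Rightarrow> ereal) \<Rightarrow> bool" where
  "proper_fun f \<longleftrightarrow> (\<forall>x. f x \<noteq> -\<infinity>) \<and> (\<exists>x. f x \<noteq> \<infinity>)"

definition closed_fun :: "(real^'n \<Rightarrow> ereal) \<Rightarrow> bool" where
  "closed_fun f \<longleftrightarrow> closed (epigraph f)"

definition convex_fun :: "(real^'n \<Rightarrow> ereal) \<Rightarrow> bool" where
  "convex_fun f \<longleftrightarrow> convex (epigraph f)"

definition subdiff :: "(real^'n \<Rightarrow> ereal) \<Rightarrow> real^'n \<Rightarrow> (real^'n) set" where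
  "subdiff f x = {g. f x \<noteq> \<infinity> \<and> (\<forall>y. f y \<ge> f x + ereal (g \<bullet> (y - x)))}"

(* matrices on vertex set {0..<m} as functions nat => nat => real *)
definition symmetric_mat :: "nat \<Rightarrow> (nat \<Rightarrow> nat \<Rightarrow> real) \<Rightarrow> bool" where
  "symmetric_mat m P \<longleftrightarrow> (\<forall>i<m. \<forall>j<m. P i j = P j i)"

definition stochastic_mat :: "nat \<Rightarrow> (nat \<Rightarrow> nat \<Rightarrow> real) \<Rightarrow> bool" where
  "stochastic_mat m P \<longleftrightarrow> (\<forall>i<m. \<forall>j<m. 0 \<le> P i j) \<and> (\<forall>i<m. (\<Sum>j<m. P i j) = 1)"

definition irreducible_mat :: "nat \<Rightarrow> (nat \<Rightarrow> nat \<Rightarrow> real) \<Rightarrow> bool" where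
  "irreducible_mat m P \<longleftrightarrow>
     (\<forall>i<m. \<forall>j<m. (i, j) \<in> {(a, b). a < m \<and> b < m \<and> P a b \<noteq> 0}\<^sup>*)"

definition psd_mat :: "nat \<Rightarrow> (nat \<Rightarrow> nat \<Rightarrow> real) \<Rightarrow> bool" where
  "psd_mat m P \<longleftrightarrow> (\<forall>z::nat \<Rightarrow> real. 0 \<le> (\<Sum>i<m. \<Sum>j<m. z i * P i j * z j))"

definition connected_graph :: "nat \<Rightarrow> (nat \<Rightarrow> nat \<Rightarrow> bool) \<Rightarrow> bool" where
  "connected_graph m E \<longleftrightarrow> (\<forall>i j. E i j \<longrightarrow> i < m \<and> j < m \<and> E j i) \<and>
     (\<forall>i<m. \<forall>j<m. (i, j) \<in> {(a, b). E a b}\<^sup>*)"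

definition neighbors :: "(nat \<Rightarrow> nat \<Rightarrow> bool) \<Rightarrow> nat \<Rightarrow> nat set" where
  "neighbors E i = {j. E i j}"

end

theory Submission
  imports Defs
begin


lemma powr_convex0:
  assumes "(r::real) \<ge> 1" shows "convex_on {0..} (\<lambda>x. x powr r)"
proof (rule convex_on_linorderI)
  fix t x y :: real assume t: "0 < t" "t < 1" and xy: "x \<in> {0..}" "y \<in> {0..}" "x < y"
  show "((1 - t) *\<^sub>R x + t *\<^sub>R y) powr r \<le> (1 - t) * x powr r + t * y powr r"
  proof (cases "x = 0")
    case True
    have h: "t powr r \<le> t" using powr_mono'[of 1 r t] t assms by simp
    have "t powr r * y powr r \<le> t * y powr r" using mult_right_mono[OF h, of "y powr r"] by simp
    then show ?thesis using True t xy by (simp add: powr_mult)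
  next
    case False
    then show ?thesis using convex_onD[OF powr_convex[OF assms], of t x y] t xy by auto
  qed
qed (simp add: convex_real_interval)

lemma norm_sq_sum: "(norm (u::real^'n))\<^sup>2 = (\<Sum>k\<in>UNIV. (u$k)\<^sup>2)"
  by (simp add: norm_vec_def L2_set_def sum_nonneg)

lemma pnorm_ge:
  fixes u :: "real^'n"
  assumes p: "1 \<le> p"
  shows "min 1 (real CARD('n) powr (2/p - 1)) * (norm u)\<^sup>2 \<le> (pnorm p u)\<^sup>2"
proof -
  define a where "a k = (u$k)\<^sup>2" for k
  define r where "r = p/2"
  define N where "N = (\<Sum>k\<in>UNIV. a k)"
  define S where "S = (\<Sum>k\<in>UNIV. a k powr r)"
  have r0: "r > 0" using p r_def by simp
  have a0: "a k \<ge> 0" for k by (simp add: a_def)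
  have N0: "N \<ge> 0" unfolding N_def by (simp add: a0 sum_nonneg)
  have S0: "S \<ge> 0" unfolding S_def by (simp add: sum_nonneg)
  have nN: "(norm u)\<^sup>2 = N" by (simp add: norm_sq_sum N_def a_def)
  have absk: "\<bar>u$k\<bar> powr p = a k powr r" for k
  proof (cases "u$k = 0")
    case True then show ?thesis using r0 p by (simp add: a_def)
  next
    case False
    have sq: "(u$k)^2 = \<bar>u$k\<bar> powr 2" using powr_realpow[of "\<bar>u$k\<bar>" 2] False by simp
    have "a k powr r = ((u$k)^2) powr (p/2)" by (simp add: a_def r_def)
    also have "\<dots> = (\<bar>u$k\<bar> powr 2) powr (p/2)" unfolding sq ..
    also have "\<dots> = \<bar>u$k\<bar> powr p" unfolding powr_powr by simp
    finally show ?thesis by simp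
  qed
  have pn: "(pnorm p u)\<^sup>2 = S powr (1/r)"
  proof -
    have e: "1/p + 1/p = 1/r" unfolding r_def by simp
    have "(pnorm p u)\<^sup>2 = (S powr (1/p))\<^sup>2" unfolding pnorm_def S_def by (simp add: absk)
    also have "\<dots> = S powr (1/p) * S powr (1/p)" by (simp add: power2_eq_square)
    also have "\<dots> = S powr (1/p + 1/p)" by (rule powr_add[symmetric])
    also have "\<dots> = S powr (1/r)" by (simp only: e)
    finally show ?thesis .
  qed
  show ?thesis
  proof (cases "p \<le> 2")
    case True
    have "N \<le> S powr (1/r)"
    proof (cases "N = 0")
      case True then show ?thesis using S0 by simp
    next
      case False
      then have Np: "N > 0" using N0 by simp
      have le1: "a k / N \<le> 1" for k
      proof -
        have "a k \<le> N" unfolding N_def using a0 by (intro member_le_sum) auto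
        then show ?thesis using Np by simp
      qed
      have "1 = (\<Sum>k\<in>UNIV. a k / N)" using Np by (simp add: N_def flip: sum_divide_distrib)
      also have "\<dots> \<le> (\<Sum>k\<in>UNIV. (a k / N) powr r)"
      proof (rule sum_mono)
        fix k
        have "(a k / N) powr 1 \<le> (a k / N) powr r"
          by (rule powr_mono') (use le1 a0 Np True r_def in auto)
        then show "a k / N \<le> (a k / N) powr r" using a0 Np
          by (cases "a k = 0") auto
      qed
      also have "\<dots> = S / N powr r" by (simp add: powr_divide a0 N0 S_def sum_divide_distrib)
      finally have "N powr r \<le> S" using Np by (simp add: field_simps)
      then have "(N powr r) powr (1/r) \<le> S powr (1/r)"
        using powr_mono2[of "1/r" "N powr r" S] r0 by simp
      then show ?thesis using r0 N0 by (simp add: powr_powr)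
    qed
    moreover have "min 1 (real CARD('n) powr (2/p - 1)) * N \<le> N" using N0
      by (simp add: mult_left_le_one_le min_le_iff_disj)
    ultimately show ?thesis using nN pn by simp
  next
    case False
    then have r1: "r \<ge> 1" using r_def by simp
    define n where "n = real CARD('n)"
    have n0: "n > 0" by (simp add: n_def)
    have J: "(\<Sum>k\<in>UNIV. (1/n) *\<^sub>R a k) powr r \<le> (\<Sum>k\<in>UNIV. (1/n) * a k powr r)"
      by (rule convex_on_sum[OF _ _ powr_convex0[OF r1]]) (auto simp: n_def a0)
    have e1: "(\<Sum>k\<in>UNIV. (1/n) *\<^sub>R a k) = N/n"
      unfolding N_def by (simp add: sum_divide_distrib)
    have e2: "(\<Sum>k\<in>UNIV. (1/n) * a k powr r) = S/n"
      unfolding S_def by (simp add: sum_divide_distrib)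
    have "(N/n) powr r \<le> S/n" using J unfolding e1 e2 .
    then have "((N/n) powr r) powr (1/r) \<le> (S/n) powr (1/r)"
      using powr_mono2[of "1/r" "(N/n) powr r" "S/n"] r0 by simp
    moreover have "((N/n) powr r) powr (1/r) = N/n"
      using r0 N0 n0 by (simp add: powr_powr)
    moreover have "(S/n) powr (1/r) = S powr (1/r) / n powr (1/r)"
      by (rule powr_divide)
    ultimately have q1: "N/n \<le> S powr (1/r) / n powr (1/r)" by simp
    have q2: "n powr (1/r - 1) * N = n powr (1/r) * (N/n)"
      using n0 by (simp add: powr_diff)
    have q3: "n powr (1/r) * (S powr (1/r) / n powr (1/r)) = S powr (1/r)"
      using n0 by simp
    have "n powr (1/r - 1) * N \<le> n powr (1/r) * (S powr (1/r) / n powr (1/r))"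
      unfolding q2 by (rule mult_left_mono[OF q1]) simp
    then have "n powr (1/r - 1) * N \<le> S powr (1/r)" unfolding q3 .
    moreover have "1/r - 1 = 2/p - 1" by (simp add: r_def)
    ultimately have "n powr (2/p - 1) * N \<le> S powr (1/r)" by simp
    moreover have "min 1 (n powr (2/p - 1)) * N \<le> n powr (2/p - 1) * N"
      by (rule mult_right_mono) (use N0 in auto)
    ultimately show ?thesis using nN pn n_def by simp
  qed
qed



definition Pm :: "nat \<Rightarrow> (nat\<Rightarrow>nat\<Rightarrow>real) \<Rightarrow> (nat \<Rightarrow> real^'n) \<Rightarrow> nat \<Rightarrow> real^'n" where
  "Pm m P u i = (\<Sum>j<m. P i j *\<^sub>R u j)"
definition Lm :: "nat \<Rightarrow> (nat\<Rightarrow>nat\<Rightarrow>real) \<Rightarrow> (nat \<Rightarrow> real^'n) \<Rightarrow> nat \<Rightarrow> real^'n" where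
  "Lm m P u i = u i - Pm m P u i"
definition ip :: "nat \<Rightarrow> (nat \<Rightarrow> real^'n) \<Rightarrow> (nat \<Rightarrow> real^'n) \<Rightarrow> real" where
  "ip m u v = (\<Sum>i<m. u i \<bullet> v i)"

lemma ip_sym: "ip m u v = ip m v u"
  by (simp add: ip_def inner_commute)
lemma ip_diff_right: "ip m u (\<lambda>i. v i - w i) = ip m u v - ip m u w"
  by (simp add: ip_def inner_diff_right sum_subtractf)
lemma ip_diff_left: "ip m (\<lambda>i. v i - w i) u = ip m v u - ip m w u"
  by (simp add: ip_def inner_diff_left sum_subtractf)
lemma ip_add_right: "ip m u (\<lambda>i. v i + w i) = ip m u v + ip m u w"
  by (simp add: ip_def inner_add_right sum.distrib)
lemma ip_add_left: "ip m (\<lambda>i. v i + w i) u = ip m v u + ip m w u"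
  by (simp add: ip_def inner_add_left sum.distrib)
lemma ip_scale_right: "ip m u (\<lambda>i. c *\<^sub>R v i) = c * ip m u v"
  by (simp add: ip_def sum_distrib_left)
lemma ip_scale_left: "ip m (\<lambda>i. c *\<^sub>R v i) u = c * ip m v u"
  by (simp add: ip_def sum_distrib_left)
lemma ip_self_ge0: "ip m u u \<ge> 0"
  by (simp add: ip_def sum_nonneg)
lemma ip_self_norm: "ip m u u = (\<Sum>i<m. (norm (u i))\<^sup>2)"
  by (simp add: ip_def power2_norm_eq_inner)

lemma Pm_diff: "Pm m P (\<lambda>i. u i - v i) = (\<lambda>i. Pm m P u i - Pm m P v i)"
  by (simp add: Pm_def fun_eq_iff scaleR_diff_right sum_subtractf)
lemma Pm_add: "Pm m P (\<lambda>i. u i + v i) = (\<lambda>i. Pm m P u i + Pm m P v i)"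
  by (simp add: Pm_def fun_eq_iff scaleR_add_right sum.distrib)
lemma Lm_alt: "Lm m P u = (\<lambda>i. u i - Pm m P u i)"
  by (simp add: Lm_def fun_eq_iff)
lemma Pm_Lm: "Pm m P (Lm m P u) = Lm m P (Pm m P u)"
  by (simp add: Lm_alt Pm_diff)

lemma ip_Pm:
  assumes sym: "symmetric_mat m P"
  shows "ip m u (Pm m P v) = ip m (Pm m P u) v"
proof -
  have "ip m u (Pm m P v) = (\<Sum>i<m. \<Sum>j<m. P i j * (u i \<bullet> v j))"
    by (simp add: ip_def Pm_def inner_sum_right)
  also have "\<dots> = (\<Sum>j<m. \<Sum>i<m. P i j * (u i \<bullet> v j))" by (rule sum.swap)
  also have "\<dots> = (\<Sum>j<m. \<Sum>i<m. P j i * (u i \<bullet> v j))"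
    using sym by (intro sum.cong refl) (auto simp: symmetric_mat_def)
  also have "\<dots> = ip m (Pm m P u) v"
    by (simp add: ip_def Pm_def inner_sum_left)
  finally show ?thesis .
qed

lemma ip_Lm:
  assumes sym: "symmetric_mat m P"
  shows "ip m u (Lm m P v) = ip m (Lm m P u) v"
  by (simp add: Lm_alt ip_diff_right ip_diff_left ip_Pm[OF sym])

lemma ip_Pm_psd:
  assumes psd: "psd_mat m P"
  shows "ip m u (Pm m P u) \<ge> 0"
proof -
  have "ip m u (Pm m P u) = (\<Sum>i<m. \<Sum>j<m. P i j * (u i \<bullet> u j))"
    by (simp add: ip_def Pm_def inner_sum_right)
  also have "\<dots> = (\<Sum>i<m. \<Sum>j<m. \<Sum>k\<in>UNIV. (u i $ k) * P i j * (u j $ k))"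
    by (simp add: inner_vec_def sum_distrib_left mult_ac)
  also have "\<dots> = (\<Sum>i<m. \<Sum>k\<in>UNIV. \<Sum>j<m. (u i $ k) * P i j * (u j $ k))"
    by (intro sum.cong refl sum.swap)
  also have "\<dots> = (\<Sum>k\<in>UNIV. \<Sum>i<m. \<Sum>j<m. (u i $ k) * P i j * (u j $ k))"
    by (rule sum.swap)
  also have "\<dots> \<ge> 0"
  proof (rule sum_nonneg)
    fix k
    show "0 \<le> (\<Sum>i<m. \<Sum>j<m. (u i $ k) * P i j * (u j $ k))"
      using psd unfolding psd_mat_def by (rule allE[of _ "\<lambda>i. u i $ k"])
  qed
  finally show ?thesis .
qed

lemma col_sum:
  assumes sym: "symmetric_mat m P" and st: "stochastic_mat m P" and j: "j < m"
  shows "(\<Sum>i<m. P i j) = 1"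
proof -
  have "(\<Sum>i<m. P i j) = (\<Sum>i<m. P j i)" using sym j by (intro sum.cong) (auto simp: symmetric_mat_def)
  then show ?thesis using st j by (simp add: stochastic_mat_def)
qed

lemma ip_Lm_psd:
  assumes sym: "symmetric_mat m P" and st: "stochastic_mat m P"
  shows "ip m u (Lm m P u) \<ge> 0"
proof -
  have P0: "\<forall>i<m. \<forall>j<m. 0 \<le> P i j" using st by (simp add: stochastic_mat_def)
  have "ip m u (Pm m P u) = (\<Sum>i<m. \<Sum>j<m. P i j * (u i \<bullet> u j))"
    by (simp add: ip_def Pm_def inner_sum_right)
  also have "\<dots> \<le> (\<Sum>i<m. \<Sum>j<m. P i j * ((norm (u i))\<^sup>2 / 2 + (norm (u j))\<^sup>2 / 2))"
  proof (intro sum_mono mult_left_mono)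
    fix i j
    have "0 \<le> (norm (u i - u j))\<^sup>2" by simp
    then show "u i \<bullet> u j \<le> (norm (u i))\<^sup>2 / 2 + (norm (u j))\<^sup>2 / 2"
      by (simp add: power2_norm_eq_inner inner_diff_left inner_diff_right inner_commute)
  next
    fix i j assume "i \<in> {..<m}" "j \<in> {..<m}" then show "0 \<le> P i j" using P0 by auto
  qed
  also have "\<dots> = (\<Sum>i<m. \<Sum>j<m. P i j * (norm (u i))\<^sup>2) / 2 + (\<Sum>i<m. \<Sum>j<m. P i j * (norm (u j))\<^sup>2) / 2"
    by (simp add: distrib_left sum.distrib sum_divide_distrib)
  also have "(\<Sum>i<m. \<Sum>j<m. P i j * (norm (u i))\<^sup>2) = (\<Sum>i<m. (norm (u i))\<^sup>2)"
    using st by (intro sum.cong refl) (simp add: stochastic_mat_def flip: sum_distrib_right)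
  also have "(\<Sum>i<m. \<Sum>j<m. P i j * (norm (u j))\<^sup>2) = (\<Sum>j<m. \<Sum>i<m. P i j * (norm (u j))\<^sup>2)"
    by (rule sum.swap)
  also have "\<dots> = (\<Sum>j<m. (norm (u j))\<^sup>2)"
    using col_sum[OF sym st] by (intro sum.cong refl) (simp flip: sum_distrib_right)
  finally have "ip m u (Pm m P u) \<le> ip m u u" by (simp add: ip_self_norm)
  then show ?thesis by (simp add: Lm_alt ip_diff_right)
qed

lemma key_PL:
  assumes sym: "symmetric_mat m P" and st: "stochastic_mat m P" and psd: "psd_mat m P"
  shows "ip m (Lm m P u) (Lm m P u) \<le> ip m u u - ip m (Pm m P u) (Pm m P u)"
proof -
  let ?P = "Pm m P u" and ?L = "Lm m P u"
  have u: "u = (\<lambda>i. ?P i + ?L i)" by (simp add: Lm_alt)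
  have "ip m ?L ?P = ip m ?L (Pm m P (\<lambda>i. ?P i + ?L i))" using u by simp
  also have "\<dots> = ip m ?L (Pm m P ?P) + ip m ?L (Pm m P ?L)"
    by (simp add: Pm_add ip_add_right)
  also have "ip m ?L (Pm m P ?P) = ip m (Pm m P ?L) ?P" by (rule ip_Pm[OF sym])
  also have "\<dots> = ip m (Lm m P ?P) ?P" by (simp add: Pm_Lm)
  also have "\<dots> = ip m ?P (Lm m P ?P)" by (rule ip_sym)
  finally have "ip m ?L ?P = ip m ?P (Lm m P ?P) + ip m ?L (Pm m P ?L)" .
  moreover have "ip m ?P (Lm m P ?P) \<ge> 0" by (rule ip_Lm_psd[OF sym st])
  moreover have "ip m ?L (Pm m P ?L) \<ge> 0" by (rule ip_Pm_psd[OF psd])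
  ultimately have h: "ip m ?L ?P \<ge> 0" by simp
  have "ip m ?L ?L = ip m u u - 2 * ip m u ?P + ip m ?P ?P"
    by (simp add: Lm_alt ip_diff_left ip_diff_right ip_sym[of m ?P u])
  moreover have "ip m ?L ?P = ip m u ?P - ip m ?P ?P"
    by (simp add: Lm_alt ip_diff_left)
  ultimately show ?thesis using h by simp
qed

lemma bary_bound:
  assumes sym: "symmetric_mat m P" and st: "stochastic_mat m P"
  shows "ip m x x - ip m (Pm m P x) (Pm m P x) \<le> (\<Sum>i<m. \<Sum>j<m. P i j * (norm (y i - x j))\<^sup>2)"
proof -
  have P0: "\<forall>i<m. \<forall>j<m. 0 \<le> P i j" and rs: "\<forall>i<m. (\<Sum>j<m. P i j) = 1"
    using st by (auto simp: stochastic_mat_def)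
  have each: "(\<Sum>j<m. P i j * (norm (x j))\<^sup>2) - (norm (Pm m P x i))\<^sup>2 \<le> (\<Sum>j<m. P i j * (norm (y i - x j))\<^sup>2)"
    if i: "i < m" for i
  proof -
    let ?c = "Pm m P x i"
    have "(\<Sum>j<m. P i j * (norm (y i - x j))\<^sup>2)
        = (\<Sum>j<m. P i j * ((norm (y i))\<^sup>2 - 2 * (y i \<bullet> x j) + (norm (x j))\<^sup>2))"
      by (intro sum.cong refl) (simp add: power2_norm_eq_inner inner_diff_left inner_diff_right inner_commute)
    also have "\<dots> = (norm (y i))\<^sup>2 * (\<Sum>j<m. P i j) - 2 * (y i \<bullet> ?c) + (\<Sum>j<m. P i j * (norm (x j))\<^sup>2)"
      by (simp add: algebra_simps sum.distrib sum_subtractf sum_distrib_left sum_distrib_right Pm_def inner_sum_right)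
    also have "\<dots> = (norm (y i))\<^sup>2 - 2 * (y i \<bullet> ?c) + (\<Sum>j<m. P i j * (norm (x j))\<^sup>2)"
      using rs i by simp
    finally have e: "(\<Sum>j<m. P i j * (norm (y i - x j))\<^sup>2) = (norm (y i))\<^sup>2 - 2 * (y i \<bullet> ?c) + (\<Sum>j<m. P i j * (norm (x j))\<^sup>2)" .
    have "0 \<le> (norm (y i - ?c))\<^sup>2" by simp
    then have "0 \<le> (norm (y i))\<^sup>2 - 2 * (y i \<bullet> ?c) + (norm ?c)\<^sup>2"
      by (simp add: power2_norm_eq_inner inner_diff_left inner_diff_right inner_commute)
    then show ?thesis using e by simp
  qed
  have "(\<Sum>i<m. \<Sum>j<m. P i j * (norm (x j))\<^sup>2) = (\<Sum>j<m. \<Sum>i<m. P i j * (norm (x j))\<^sup>2)"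
    by (rule sum.swap)
  also have "\<dots> = ip m x x"
    using col_sum[OF sym st] by (simp add: ip_self_norm flip: sum_distrib_right)
  finally have "ip m x x - ip m (Pm m P x) (Pm m P x) = (\<Sum>i<m. (\<Sum>j<m. P i j * (norm (x j))\<^sup>2) - (norm (Pm m P x i))\<^sup>2)"
    by (simp add: ip_self_norm[of m "Pm m P x"] sum_subtractf)
  also have "\<dots> \<le> (\<Sum>i<m. \<Sum>j<m. P i j * (norm (y i - x j))\<^sup>2)" by (rule sum_mono) (use each in auto)
  finally show ?thesis .
qed



lemma grad_works:
  fixes \<psi> :: "real^'n \<Rightarrow> real"
  assumes "\<psi> differentiable (at v)"
  shows "(\<psi> has_derivative (\<lambda>h. grad \<psi> v \<bullet> h)) (at v)"
proof -
  obtain f' where f': "(\<psi> has_derivative f') (at v)" using assms by (auto simp: differentiable_def)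
  have lin: "linear f'" using has_derivative_linear[OF f'] .
  define g where "g = (\<Sum>b\<in>Basis. f' b *\<^sub>R b)"
  have fg: "f' h = g \<bullet> h" for h
  proof -
    have "f' h = f' (\<Sum>b\<in>Basis. (h \<bullet> b) *\<^sub>R b)" by (simp add: euclidean_representation)
    also have "\<dots> = (\<Sum>b\<in>Basis. (h \<bullet> b) * f' b)"
      using lin by (simp add: linear_sum linear_scale)
    also have "\<dots> = g \<bullet> h" unfolding g_def inner_sum_left
      by (intro sum.cong refl) (metis inner_commute inner_scaleR_left mult.commute)
    finally show ?thesis .
  qed
  have ex: "(\<psi> has_derivative (\<lambda>h. g \<bullet> h)) (at v)" using f' fg
    by (metis (no_types, lifting) ext)
  have "(\<psi> has_derivative (\<lambda>h. (THE g. (\<psi> has_derivative (\<lambda>h. g \<bullet> h)) (at v)) \<bullet> h)) (at v)"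
  proof (rule theI[of _ g])
    show "(\<psi> has_derivative (\<lambda>h. g \<bullet> h)) (at v)" by (rule ex)
  next
    fix g2 assume "(\<psi> has_derivative (\<lambda>h. g2 \<bullet> h)) (at v)"
    then have "(\<lambda>h. g2 \<bullet> h) = (\<lambda>h. g \<bullet> h)" using ex has_derivative_unique by blast
    then have "g2 \<bullet> (g2 - g) = g \<bullet> (g2 - g)" by meson
    then have "(g2 - g) \<bullet> (g2 - g) = 0" by (simp add: inner_diff_left)
    then show "g2 = g" by simp
  qed
  then show ?thesis by (simp add: grad_def)
qed

lemma dir_quot:
  fixes q :: "'a::real_normed_vector \<Rightarrow> real"
  assumes "(q has_derivative q') (at a)"
  shows "((\<lambda>s. (q (a + s *\<^sub>R d) - q a) / s) \<longlongrightarrow> q' d) (at_right 0)"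
proof -
  have lin: "linear q'" using has_derivative_linear[OF assms] .
  have h1: "((\<lambda>s::real. a + s *\<^sub>R d) has_derivative (\<lambda>s. s *\<^sub>R d)) (at 0)"
    by (auto intro!: derivative_eq_intros)
  have h2: "(q has_derivative q') (at ((\<lambda>s::real. a + s *\<^sub>R d) 0))" using assms by simp
  have "((q \<circ> (\<lambda>s::real. a + s *\<^sub>R d)) has_derivative (q' \<circ> (\<lambda>s. s *\<^sub>R d))) (at 0)"
    by (rule diff_chain_at[OF h1 h2])
  moreover have "(q' \<circ> (\<lambda>s. s *\<^sub>R d)) = (\<lambda>s. q' d * s)"
    using lin by (auto simp: fun_eq_iff linear_scale)
  ultimately have "((\<lambda>s. q (a + s *\<^sub>R d)) has_field_derivative q' d) (at 0)"
    by (simp add: has_field_derivative_def comp_def)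
  then have "((\<lambda>s. (q (a + s *\<^sub>R d) - q (a + 0 *\<^sub>R d)) / (s - 0)) \<longlongrightarrow> q' d) (at 0)"
    by (rule has_field_derivative_iff[THEN iffD1])
  then have "((\<lambda>s. (q (a + s *\<^sub>R d) - q a) / s) \<longlongrightarrow> q' d) (at 0)" by simp
  then show ?thesis by (simp add: filterlim_at_split)
qed

lemma dir_lower:
  fixes q :: "'a::real_normed_vector \<Rightarrow> real"
  assumes "(q has_derivative q') (at a)"
    and "\<And>s. 0 < s \<Longrightarrow> s < 1 \<Longrightarrow> s * c \<le> q (a + s *\<^sub>R d) - q a"
  shows "c \<le> q' d"
proof (rule tendsto_lowerbound[OF dir_quot[OF assms(1)]])
  show "\<forall>\<^sub>F s in at_right 0. c \<le> (q (a + s *\<^sub>R d) - q a) / s"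
    unfolding eventually_at_right_field
  proof (intro exI[of _ 1] conjI allI impI)
    fix s :: real assume s: "0 < s" "s < 1"
    then have "s * c \<le> q (a + s *\<^sub>R d) - q a" by (rule assms(2))
    then show "c \<le> (q (a + s *\<^sub>R d) - q a) / s" using s by (simp add: field_simps)
  qed simp
qed simp

lemma dir_upper:
  fixes q :: "'a::real_normed_vector \<Rightarrow> real"
  assumes "(q has_derivative q') (at a)"
    and "\<And>s. 0 < s \<Longrightarrow> s < 1 \<Longrightarrow> q (a + s *\<^sub>R d) - q a \<le> s * c"
  shows "q' d \<le> c"
proof (rule tendsto_upperbound[OF dir_quot[OF assms(1)]])
  show "\<forall>\<^sub>F s in at_right 0. (q (a + s *\<^sub>R d) - q a) / s \<le> c"
    unfolding eventually_at_right_field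
  proof (intro exI[of _ 1] conjI allI impI)
    fix s :: real assume s: "0 < s" "s < 1"
    then have "q (a + s *\<^sub>R d) - q a \<le> s * c" by (rule assms(2))
    then show "(q (a + s *\<^sub>R d) - q a) / s \<le> c" using s by (simp add: field_simps)
  qed simp
qed simp

lemma three_point:
  "bregman \<psi> z y - bregman \<psi> a y - bregman \<psi> z a = (grad \<psi> a - grad \<psi> y) \<bullet> (z - a)"
  by (simp add: bregman_def inner_diff_left inner_diff_right algebra_simps)

lemma bregman_nonneg:
  fixes \<psi> :: "real^'n \<Rightarrow> real"
  assumes sc: "strictly_convex_on D \<psi>" and dif: "\<forall>z\<in>D. \<psi> differentiable (at z)"
    and u: "u \<in> D" and v: "v \<in> D" and cD: "convex D"
  shows "bregman \<psi> u v \<ge> 0"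
proof (cases "u = v")
  case True then show ?thesis by (simp add: bregman_def)
next
  case False
  have "grad \<psi> v \<bullet> (u - v) \<le> \<psi> u - \<psi> v"
  proof (rule dir_upper[of \<psi> "\<lambda>h. grad \<psi> v \<bullet> h" v])
    show "(\<psi> has_derivative (\<lambda>h. grad \<psi> v \<bullet> h)) (at v)" using grad_works dif v by blast
  next
    fix s :: real assume s: "0 < s" "s < 1"
    have "\<psi> ((1 - s) *\<^sub>R v + s *\<^sub>R u) < (1 - s) * \<psi> v + s * \<psi> u"
      using sc u v False s unfolding strictly_convex_on_def by (metis)
    moreover have "(1 - s) *\<^sub>R v + s *\<^sub>R u = v + s *\<^sub>R (u - v)" by (simp add: algebra_simps)
    ultimately show "\<psi> (v + s *\<^sub>R (u - v)) - \<psi> v \<le> s * (\<psi> u - \<psi> v)" by (simp add: algebra_simps)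
  qed
  then show ?thesis by (simp add: bregman_def)
qed



lemma epi_convex:
  fixes F :: "real^'n \<Rightarrow> ereal"
  assumes cf: "convex_fun F" and a: "F a = ereal A" and z: "F z = ereal Z"
    and s: "0 \<le> s" "s \<le> 1"
  shows "F ((1 - s) *\<^sub>R a + s *\<^sub>R z) \<le> ereal ((1 - s) * A + s * Z)"
proof -
  have "(a, A) \<in> epigraph F" "(z, Z) \<in> epigraph F" using a z by (auto simp: epigraph_def)
  moreover have "convex (epigraph F)" using cf by (simp add: convex_fun_def)
  ultimately have "(1 - s) *\<^sub>R (a, A) + s *\<^sub>R (z, Z) \<in> epigraph F"
    using s by (intro convexD) auto
  then show ?thesis by (simp add: epigraph_def)
qed

lemma epi_jensen:
  fixes F :: "real^'n \<Rightarrow> ereal" and v :: "nat \<Rightarrow> real^'n"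
  assumes cf: "convex_fun F" and fin: "finite S" and ne: "S \<noteq> {}"
    and val: "\<And>t. t \<in> S \<Longrightarrow> F (v t) = ereal (c t)"
  shows "F ((1 / real (card S)) *\<^sub>R (\<Sum>t\<in>S. v t)) \<le> ereal ((1 / real (card S)) * (\<Sum>t\<in>S. c t))"
proof -
  have cS: "real (card S) > 0" using fin ne by (simp add: card_gt_0_iff)
  have "(\<Sum>t\<in>S. (1 / real (card S)) *\<^sub>R (v t, c t)) \<in> epigraph F"
  proof (rule convex_sum[OF fin])
    show "convex (epigraph F)" using cf by (simp add: convex_fun_def)
    show "(\<Sum>i\<in>S. 1 / real (card S)) = 1" using cS by simp
  qed (use val in \<open>auto simp: epigraph_def\<close>)
  moreover have "(\<Sum>t\<in>S. (1 / real (card S)) *\<^sub>R (v t, c t))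
      = ((1 / real (card S)) *\<^sub>R (\<Sum>t\<in>S. v t), (1 / real (card S)) * (\<Sum>t\<in>S. c t))"
    by (simp add: prod_eq_iff fst_sum snd_sum scaleR_sum_right sum_distrib_left)
  ultimately show ?thesis by (simp add: epigraph_def)
qed

lemma norm2_convex: "convex_on UNIV (\<lambda>x::'a::real_inner. (norm x)\<^sup>2)"
proof (rule convex_onI)
  fix t :: real and x y :: 'a assume t: "0 < t" "t < 1"
  define A where "A = x \<bullet> x"
  define B where "B = y \<bullet> y"
  define C where "C = x \<bullet> y"
  have h1: "(norm ((1 - t) *\<^sub>R x + t *\<^sub>R y))\<^sup>2 = (1-t)*(1-t)*A + 2*((1-t)*t)*C + t*t*B"
    unfolding power2_norm_eq_inner inner_add_left inner_add_right inner_scaleR_left inner_scaleR_right A_def B_def C_def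
    by (simp add: inner_commute algebra_simps)
  have h2: "(norm (x - y))\<^sup>2 = A - 2*C + B"
    unfolding power2_norm_eq_inner inner_diff_left inner_diff_right A_def B_def C_def
    by (simp add: inner_commute algebra_simps)
  have h3: "(norm x)\<^sup>2 = A" "(norm y)\<^sup>2 = B" by (simp_all add: A_def B_def power2_norm_eq_inner)
  have "(1 - t) * (norm x)\<^sup>2 + t * (norm y)\<^sup>2 - (norm ((1 - t) *\<^sub>R x + t *\<^sub>R y))\<^sup>2
        = t * (1 - t) * (norm (x - y))\<^sup>2"
    unfolding h1 h2 h3 by (simp add: algebra_simps)
  moreover have "0 \<le> t * (1 - t) * (norm (x - y))\<^sup>2" using t by simp
  ultimately show "(norm ((1 - t) *\<^sub>R x + t *\<^sub>R y))\<^sup>2 \<le> (1 - t) * (norm x)\<^sup>2 + t * (norm y)\<^sup>2"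
    by linarith
qed simp

lemma norm2_jensen:
  fixes v :: "nat \<Rightarrow> 'a::real_inner"
  assumes fin: "finite S" and ne: "S \<noteq> {}"
  shows "(norm ((1 / real (card S)) *\<^sub>R (\<Sum>t\<in>S. v t)))\<^sup>2 \<le> (1 / real (card S)) * (\<Sum>t\<in>S. (norm (v t))\<^sup>2)"
proof -
  have cS: "real (card S) > 0" using fin ne by (simp add: card_gt_0_iff)
  have "(norm (\<Sum>t\<in>S. (1 / real (card S)) *\<^sub>R v t))\<^sup>2 \<le> (\<Sum>t\<in>S. (1 / real (card S)) * (norm (v t))\<^sup>2)"
    by (rule convex_on_sum[OF fin ne norm2_convex]) (use cS in auto)
  then show ?thesis by (simp add: scaleR_sum_right sum_distrib_left)
qed

lemma bregman_deriv:
  fixes \<psi> :: "real^'n \<Rightarrow> real"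
  assumes "\<psi> differentiable (at a)"
  shows "((\<lambda>u. bregman \<psi> u v) has_derivative (\<lambda>h. (grad \<psi> a - grad \<psi> v) \<bullet> h)) (at a)"
proof -
  have 1: "(\<psi> has_derivative (\<lambda>h. grad \<psi> a \<bullet> h)) (at a)" using grad_works[OF assms] .
  have 2: "((\<lambda>u. grad \<psi> v \<bullet> (u - v)) has_derivative (\<lambda>h. grad \<psi> v \<bullet> h)) (at a)"
    by (auto intro!: derivative_eq_intros)
  have "((\<lambda>u. \<psi> u - \<psi> v - grad \<psi> v \<bullet> (u - v)) has_derivative (\<lambda>h. grad \<psi> a \<bullet> h - 0 - grad \<psi> v \<bullet> h)) (at a)"
    by (intro has_derivative_diff 1 2 has_derivative_const)
  then show ?thesis by (simp add: bregman_def inner_diff_left)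
qed

lemma ip_zero_left: "(\<And>i. i < m \<Longrightarrow> u i = 0) \<Longrightarrow> ip m u v = 0"
  by (simp add: ip_def)

lemma consensus:
  assumes sym: "symmetric_mat m P" and st: "stochastic_mat m P"
    and fix_: "\<And>i. i < m \<Longrightarrow> Pm m P u i = u i"
    and i: "i < m" and j: "j < m" and pos: "P i j \<noteq> 0"
  shows "u i = u j"
proof -
  have P0: "\<forall>i<m. \<forall>j<m. 0 \<le> P i j" and rs: "\<forall>i<m. (\<Sum>j<m. P i j) = 1"
    using st by (auto simp: stochastic_mat_def)
  have "(\<Sum>i<m. \<Sum>j<m. P i j * (norm (u i - u j))\<^sup>2)
      = (\<Sum>i<m. \<Sum>j<m. P i j * (norm (u i))\<^sup>2 + P i j * (norm (u j))\<^sup>2 - 2 * (P i j * (u i \<bullet> u j)))"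
  proof (intro sum.cong refl)
    fix i j
    have e: "(norm (u i - u j))\<^sup>2 = (norm (u i))\<^sup>2 + (norm (u j))\<^sup>2 - 2 * (u i \<bullet> u j)"
      by (simp add: power2_norm_eq_inner inner_diff_left inner_diff_right inner_commute)
    show "P i j * (norm (u i - u j))\<^sup>2 = P i j * (norm (u i))\<^sup>2 + P i j * (norm (u j))\<^sup>2 - 2 * (P i j * (u i \<bullet> u j))"
      unfolding e by (simp add: algebra_simps)
  qed
  also have "\<dots> = (\<Sum>i<m. \<Sum>j<m. P i j * (norm (u i))\<^sup>2) + (\<Sum>i<m. \<Sum>j<m. P i j * (norm (u j))\<^sup>2)
        - 2 * (\<Sum>i<m. \<Sum>j<m. P i j * (u i \<bullet> u j))"
    by (simp add: sum.distrib sum_subtractf sum_distrib_left)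
  also have "(\<Sum>i<m. \<Sum>j<m. P i j * (norm (u i))\<^sup>2) = (\<Sum>i<m. (norm (u i))\<^sup>2)"
    using rs by (intro sum.cong refl) (simp flip: sum_distrib_right)
  also have "(\<Sum>i<m. \<Sum>j<m. P i j * (norm (u j))\<^sup>2) = (\<Sum>j<m. \<Sum>i<m. P i j * (norm (u j))\<^sup>2)"
    by (rule sum.swap)
  also have "\<dots> = (\<Sum>j<m. (norm (u j))\<^sup>2)"
    using col_sum[OF sym st] by (intro sum.cong refl) (simp flip: sum_distrib_right)
  also have "(\<Sum>i<m. \<Sum>j<m. P i j * (u i \<bullet> u j)) = ip m u (Pm m P u)"
    by (simp add: ip_def Pm_def inner_sum_right)
  also have "\<dots> = ip m u u" using fix_ by (simp add: ip_def)
  finally have z: "(\<Sum>i<m. \<Sum>j<m. P i j * (norm (u i - u j))\<^sup>2) = 0" by (simp add: ip_self_norm)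
  have nn: "\<forall>i\<in>{..<m}. 0 \<le> (\<Sum>j<m. P i j * (norm (u i - u j))\<^sup>2)"
    using P0 by (auto intro!: sum_nonneg)
  have all0: "\<forall>i\<in>{..<m}. (\<Sum>j<m. P i j * (norm (u i - u j))\<^sup>2) = 0"
  proof (rule sum_nonneg_eq_0_iff[THEN iffD1])
    show "finite {..<m}" by simp
    show "\<And>i. i \<in> {..<m} \<Longrightarrow> 0 \<le> (\<Sum>j<m. P i j * (norm (u i - u j))\<^sup>2)" using nn by blast
    show "(\<Sum>i<m. \<Sum>j<m. P i j * (norm (u i - u j))\<^sup>2) = 0" by (rule z)
  qed
  have "(\<Sum>j<m. P i j * (norm (u i - u j))\<^sup>2) = 0" using all0 i by blast
  then have "P i j * (norm (u i - u j))\<^sup>2 = 0"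
    using P0 i j by (subst (asm) sum_nonneg_eq_0_iff) auto
  then show ?thesis using pos by simp
qed

lemma consensus_sum:
  assumes sym: "symmetric_mat m P" and st: "stochastic_mat m P"
    and fix_: "\<And>i. i < m \<Longrightarrow> Pm m P u i = u i"
  shows "(\<Sum>i<m. \<Sum>j<m. P i j * g (u i) j) = (\<Sum>j<m. g (u j) j)"
proof -
  have "(\<Sum>i<m. \<Sum>j<m. P i j * g (u i) j) = (\<Sum>i<m. \<Sum>j<m. P i j * g (u j) j)"
  proof (intro sum.cong refl)
    fix i j assume "i \<in> {..<m}" "j \<in> {..<m}"
    then show "P i j * g (u i) j = P i j * g (u j) j"
      using consensus[OF sym st fix_, of i j] by (cases "P i j = 0") auto
  qed
  also have "\<dots> = (\<Sum>j<m. \<Sum>i<m. P i j * g (u j) j)" by (rule sum.swap)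
  also have "\<dots> = (\<Sum>j<m. g (u j) j)"
    using col_sum[OF sym st] by (intro sum.cong refl) (simp flip: sum_distrib_right)
  finally show ?thesis .
qed

lemma dual_id:
  assumes tau: "\<tau> > 0" and nu: "\<And>i. i < m \<Longrightarrow> \<nu>' i = \<nu> i + \<tau> *\<^sub>R a i"
  shows "- ip m a (\<lambda>i. \<nu> i - l i) =
    (ip m (\<lambda>i. \<nu> i - l i) (\<lambda>i. \<nu> i - l i) - ip m (\<lambda>i. \<nu>' i - l i) (\<lambda>i. \<nu>' i - l i)) / (2*\<tau>)
    + \<tau>/2 * ip m a a"
proof -
  define Q where "Q = ip m (\<lambda>i. \<nu> i - l i) (\<lambda>i. \<nu> i - l i)"
  define Q' where "Q' = ip m (\<lambda>i. \<nu>' i - l i) (\<lambda>i. \<nu>' i - l i)"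
  define Xa where "Xa = ip m a (\<lambda>i. \<nu> i - l i)"
  define Y where "Y = ip m a a"
  have "Q' = (\<Sum>i<m. (\<nu> i - l i + \<tau> *\<^sub>R a i) \<bullet> (\<nu> i - l i + \<tau> *\<^sub>R a i))"
    unfolding Q'_def ip_def by (intro sum.cong refl) (simp add: nu algebra_simps)
  also have "\<dots> = (\<Sum>i<m. (\<nu> i - l i) \<bullet> (\<nu> i - l i) + 2 * \<tau> * (a i \<bullet> (\<nu> i - l i)) + (\<tau> * \<tau>) * (a i \<bullet> a i))"
    by (intro sum.cong refl) (simp add: inner_add_left inner_add_right inner_commute)
  also have "\<dots> = Q + 2 * \<tau> * Xa + (\<tau> * \<tau>) * Y"
    by (simp add: sum.distrib sum_distrib_left Q_def Xa_def Y_def ip_def)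
  finally have H: "Q' = Q + 2 * \<tau> * Xa + (\<tau> * \<tau>) * Y" .
  have "Q - Q' = (2 * \<tau>) * (- Xa - \<tau>/2 * Y)" unfolding H by (simp add: algebra_simps)
  then have "(Q - Q') / (2 * \<tau>) = - Xa - \<tau>/2 * Y" using tau by simp
  then show ?thesis unfolding Q_def Q'_def Xa_def Y_def by linarith
qed



theorem theorem2:
  fixes m :: nat and E :: "nat \<Rightarrow> nat \<Rightarrow> bool"
    and X D :: "(real^'n) set"
    and f :: "nat \<Rightarrow> real^'n \<Rightarrow> ereal"
    and vphi :: "nat \<Rightarrow> real^'n \<Rightarrow> real" and phi :: "real^'n \<Rightarrow> real"
    and P :: "nat \<Rightarrow> nat \<Rightarrow> real"
    and xs nus :: "nat \<Rightarrow> real^'n"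
    and \<mu> p \<tau> \<rho> \<gamma> :: real and \<delta> :: "nat \<Rightarrow> real"
    and x y \<nu> :: "nat \<Rightarrow> nat \<Rightarrow> real^'n"
    and T :: nat
  assumes graph: "1 \<le> m" "connected_graph m E"
    and X: "closed X" "convex X"
    and f: "\<forall>i<m. closed_fun (f i) \<and> proper_fun (f i) \<and> convex_fun (f i)"
    and opt: "\<forall>i<m. xs i \<in> X \<and> xs i \<in> D"
      "\<forall>i<m. (\<Sum>j<m. P i j *\<^sub>R xs j) = xs i"
      "\<forall>i<m. \<exists>g\<in>normal_cone X (xs i).
          - nus i + (\<Sum>j<m. P i j *\<^sub>R nus j) - g \<in> subdiff (f i) (xs i)"
    and D: "open D" "convex D" "X \<subseteq> closure D"
    and vphi: "\<forall>i<m. strictly_convex_on D (vphi i) \<and> (\<forall>z\<in>D. vphi i differentiable (at z))"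
    and phi: "mirror_map D phi"
      "\<forall>u\<in>X \<inter> D. \<forall>v\<in>X \<inter> D. bregman phi u v \<ge> \<mu> / 2 * (pnorm p (u - v))\<^sup>2"
    and p: "1 \<le> p"
    and P: "symmetric_mat m P" "stochastic_mat m P" "irreducible_mat m P" "psd_mat m P"
      "\<forall>i<m. \<forall>j<m. P i j > 0 \<longrightarrow> j \<in> neighbors E i"
    and par: "\<tau> > 0" "\<rho> > 0" "\<forall>i<m. \<delta> i \<ge> 0"
    and init: "\<forall>i<m. x 0 i \<in> X \<inter> D" "\<forall>i<m. \<nu> 0 i = 0"
    and y_step: "\<forall>t. \<forall>i<m. y t i \<in> X \<inter> D \<and>
        (\<forall>z\<in>X \<inter> D. (\<Sum>j<m. P i j * bregman phi (y t i) (x t j))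
                      \<le> (\<Sum>j<m. P i j * bregman phi z (x t j)))"
    and x_step: "\<forall>t. \<forall>i<m. x (Suc t) i \<in> X \<inter> D \<and>
        (\<forall>z\<in>X \<inter> D.
           f i (x (Suc t) i) + ereal (x (Suc t) i \<bullet> (\<nu> t i - (\<Sum>j<m. P i j *\<^sub>R \<nu> t j))
              + \<rho> * bregman phi (x (Suc t) i) (y t i)
              + \<delta> i * bregman (vphi i) (x (Suc t) i) (x t i))
           \<le> f i z + ereal (z \<bullet> (\<nu> t i - (\<Sum>j<m. P i j *\<^sub>R \<nu> t j))
              + \<rho> * bregman phi z (y t i)
              + \<delta> i * bregman (vphi i) z (x t i)))"
    and nu_step: "\<forall>t. \<forall>i<m. \<nu> (Suc t) i =
        \<nu> t i + \<tau> *\<^sub>R x (Suc t) i - \<tau> *\<^sub>R (\<Sum>j<m. P i j *\<^sub>R x (Suc t) j)"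
    and gamma: "0 < \<gamma>" "\<gamma> < \<mu> * min 1 (real CARD('n) powr (2 / p - 1))"
    and tau: "\<tau> \<le> \<rho> * (\<mu> * min 1 (real CARD('n) powr (2 / p - 1)) - \<gamma>)"
    and T: "1 \<le> T"
  shows
    "let xbar = (\<lambda>i. (1 / real T) *\<^sub>R (\<Sum>t\<in>{1..T}. x t i));
         V0 = 1 / (2 * \<tau> * \<rho>) * (\<Sum>i<m. (norm (nus i - \<nu> 0 i))\<^sup>2)
              + (\<Sum>i<m. bregman phi (xs i) (y 0 i))
              + (\<Sum>i<m. \<delta> i / \<rho> * bregman (vphi i) (xs i) (x 0 i))
     in (\<Sum>i<m. f i (xbar i)) - (\<Sum>i<m. f i (xs i))
          \<le> ereal (1 / real T * (\<rho> * (\<Sum>i<m. bregman phi (xs i) (y 0 i))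
                     + (\<Sum>i<m. \<delta> i * bregman (vphi i) (xs i) (x 0 i))))
        \<and> 1 / 2 * (\<Sum>i<m. (norm (xbar i - (\<Sum>j<m. P i j *\<^sub>R xbar j)))\<^sup>2)
          \<le> V0 / (\<gamma> * real T)"
proof -
  define \<sigma> where "\<sigma> = min 1 (real CARD('n) powr (2 / p - 1))"
  define \<kappa> where "\<kappa> = \<mu> * \<sigma>"
  have \<sigma>0: "\<sigma> > 0" by (simp add: \<sigma>_def)
  have \<kappa>\<gamma>: "\<gamma> < \<kappa>" using gamma by (simp add: \<kappa>_def \<sigma>_def)
  have \<kappa>0: "\<kappa> > 0" using \<kappa>\<gamma> gamma by simp
  have \<mu>0: "\<mu> > 0" using \<kappa>0 \<sigma>0 by (simp add: \<kappa>_def zero_less_mult_iff)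
  have tau': "\<tau> \<le> \<rho> * (\<kappa> - \<gamma>)" using tau by (simp add: \<kappa>_def \<sigma>_def)
  have Blow: "\<kappa>/2 * (norm (u - v))\<^sup>2 \<le> bregman phi u v" if "u \<in> X \<inter> D" "v \<in> X \<inter> D" for u v
  proof -
    have "\<sigma> * (norm (u - v))\<^sup>2 \<le> (pnorm p (u - v))\<^sup>2" using pnorm_ge[OF p, of "u - v"] by (simp add: \<sigma>_def)
    then have "\<mu>/2 * (\<sigma> * (norm (u - v))\<^sup>2) \<le> \<mu>/2 * (pnorm p (u - v))\<^sup>2"
      using \<mu>0 by (intro mult_left_mono) auto
    moreover have "\<mu> / 2 * (pnorm p (u - v))\<^sup>2 \<le> bregman phi u v" using phi(2) that by blast
    ultimately show ?thesis by (simp add: \<kappa>_def)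
  qed
  have Bnn: "0 \<le> bregman phi u v" if "u \<in> X \<inter> D" "v \<in> X \<inter> D" for u v
  proof -
    have "0 \<le> \<kappa>/2 * (norm (u - v))\<^sup>2" using \<kappa>0 by simp
    then show ?thesis using Blow[OF that] by linarith
  qed
  have phidiff: "\<forall>z\<in>D. phi differentiable (at z)" using phi(1) by (simp add: mirror_map_def)
  have Vnn: "0 \<le> bregman (vphi i) u v" if "i < m" "u \<in> D" "v \<in> D" for i u v
  proof -
    have h: "strictly_convex_on D (vphi i)" "\<forall>z\<in>D. vphi i differentiable (at z)"
      using vphi that(1) by auto
    show ?thesis by (rule bregman_nonneg[OF h that(2) that(3) D(2)])
  qed
  have cXD: "convex (X \<inter> D)" using X D by (simp add: convex_Int)
  have xstepS: "x (Suc t) i \<in> X \<inter> D" if "i < m" for t i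
    using x_step[rule_format, OF that] by (rule conjunct1)
  have xin: "x t i \<in> X \<inter> D" if "i < m" for t i
  proof (cases t)
    case 0 then show ?thesis using init(1) that by blast
  next
    case (Suc t') then show ?thesis using xstepS[OF that] by simp
  qed
  have yin: "y t i \<in> X \<inter> D" if "i < m" for t i
    using y_step[rule_format, OF that] by (rule conjunct1)
  have xsin: "xs i \<in> X \<inter> D" if "i < m" for i using that opt(1) by blast
  have P0: "\<forall>i<m. \<forall>j<m. 0 \<le> P i j" and rs: "\<forall>i<m. (\<Sum>j<m. P i j) = 1"
    using P(2) by (auto simp: stochastic_mat_def)
  have Pxs: "Pm m P xs i = xs i" if "i < m" for i using opt(2) that by (simp add: Pm_def)
  have Lxs0: "Lm m P xs i = 0" if "i < m" for i using Pxs[OF that] by (simp add: Lm_def)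
  define fr where "fr i u = real_of_ereal (f i u)" for i u
  have fxs_fin: "f i (xs i) = ereal (fr i (xs i))" if i: "i < m" for i
  proof -
    obtain g where "- nus i + (\<Sum>j<m. P i j *\<^sub>R nus j) - g \<in> subdiff (f i) (xs i)"
      using opt(3) i by blast
    then have "f i (xs i) \<noteq> \<infinity>" by (simp add: subdiff_def)
    moreover have "f i (xs i) \<noteq> -\<infinity>" using f i by (simp add: proper_fun_def)
    ultimately show ?thesis by (cases "f i (xs i)") (auto simp: fr_def)
  qed
  have fx_fin: "f i (x (Suc t) i) = ereal (fr i (x (Suc t) i))" if "i < m" for i t
  proof -
    have "f i (x (Suc t) i) + ereal (x (Suc t) i \<bullet> (\<nu> t i - (\<Sum>j<m. P i j *\<^sub>R \<nu> t j))
              + \<rho> * bregman phi (x (Suc t) i) (y t i)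
              + \<delta> i * bregman (vphi i) (x (Suc t) i) (x t i))
           \<le> f i (xs i) + ereal (xs i \<bullet> (\<nu> t i - (\<Sum>j<m. P i j *\<^sub>R \<nu> t j))
              + \<rho> * bregman phi (xs i) (y t i)
              + \<delta> i * bregman (vphi i) (xs i) (x t i))"
      using x_step[rule_format, OF that] xsin[OF that] by blast
    then have "f i (x (Suc t) i) \<noteq> \<infinity>" using fxs_fin[OF that] by auto
    moreover have "f i (x (Suc t) i) \<noteq> -\<infinity>" using f that by (simp add: proper_fun_def)
    ultimately show ?thesis by (cases "f i (x (Suc t) i)") (auto simp: fr_def)
  qed
  have xVI: "fr i (x (Suc t) i) - fr i (xs i) \<le> (xs i - x (Suc t) i) \<bullet> Lm m P (\<nu> t) i
      + \<rho> * (bregman phi (xs i) (y t i) - bregman phi (x (Suc t) i) (y t i) - bregman phi (xs i) (x (Suc t) i))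
      + \<delta> i * (bregman (vphi i) (xs i) (x t i) - bregman (vphi i) (x (Suc t) i) (x t i)
                 - bregman (vphi i) (xs i) (x (Suc t) i))"
    if i: "i < m" for i t
  proof -
    define a where "a = x (Suc t) i"
    define z where "z = xs i"
    define w where "w = \<nu> t i - (\<Sum>j<m. P i j *\<^sub>R \<nu> t j)"
    define q where "q u = u \<bullet> w + \<rho> * bregman phi u (y t i) + \<delta> i * bregman (vphi i) u (x t i)" for u
    have aXD: "a \<in> X \<inter> D" using xin[OF i] by (simp add: a_def)
    have zXD: "z \<in> X \<inter> D" using xsin[OF i] by (simp add: z_def)
    have d1: "((\<lambda>u. u \<bullet> w) has_derivative (\<lambda>h. h \<bullet> w)) (at a)"
      by (rule bounded_linear_imp_has_derivative[OF bounded_linear_inner_left])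
    have d2: "((\<lambda>u. bregman phi u (y t i)) has_derivative (\<lambda>h. (grad phi a - grad phi (y t i)) \<bullet> h)) (at a)"
      using bregman_deriv phidiff aXD by blast
    have d3: "((\<lambda>u. bregman (vphi i) u (x t i)) has_derivative (\<lambda>h. (grad (vphi i) a - grad (vphi i) (x t i)) \<bullet> h)) (at a)"
      using bregman_deriv vphi aXD i by blast
    have qd: "(q has_derivative (\<lambda>h. h \<bullet> w + \<rho> * ((grad phi a - grad phi (y t i)) \<bullet> h)
                 + \<delta> i * ((grad (vphi i) a - grad (vphi i) (x t i)) \<bullet> h))) (at a)"
      unfolding q_def
      by (intro has_derivative_add d1 has_derivative_mult_right d2 d3)
    have "fr i a - fr i z \<le> (z - a) \<bullet> w + \<rho> * ((grad phi a - grad phi (y t i)) \<bullet> (z - a))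
                 + \<delta> i * ((grad (vphi i) a - grad (vphi i) (x t i)) \<bullet> (z - a))"
    proof (rule dir_lower[OF qd])
      fix s :: real assume s: "0 < s" "s < 1"
      define zs where "zs = a + s *\<^sub>R (z - a)"
      have zs': "zs = (1 - s) *\<^sub>R a + s *\<^sub>R z" by (simp add: zs_def algebra_simps)
      have zsXD: "zs \<in> X \<inter> D" unfolding zs' using cXD aXD zXD s by (intro convexD) auto
      have opt1: "f i a + ereal (q a) \<le> f i zs + ereal (q zs)"
        using x_step[rule_format, OF i] zsXD unfolding q_def a_def w_def by blast
      have fa: "f i a = ereal (fr i a)" using fx_fin[OF i] by (simp add: a_def)
      have fz: "f i z = ereal (fr i z)" using fxs_fin[OF i] by (simp add: z_def)
      have conv: "f i zs \<le> ereal ((1 - s) * fr i a + s * fr i z)"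
        unfolding zs' using epi_convex[of "f i" a "fr i a" z "fr i z" s] f i fa fz s by auto
      then have o3: "f i zs + ereal (q zs) \<le> ereal ((1 - s) * fr i a + s * fr i z) + ereal (q zs)"
        by (rule add_right_mono)
      have o2: "ereal (fr i a + q a) \<le> f i zs + ereal (q zs)" using opt1 fa by simp
      have "ereal (fr i a + q a) \<le> ereal ((1 - s) * fr i a + s * fr i z) + ereal (q zs)"
        by (rule order_trans[OF o2 o3])
      then have "ereal (fr i a + q a) \<le> ereal ((1 - s) * fr i a + s * fr i z + q zs)"
        by simp
      then have "fr i a + q a \<le> (1 - s) * fr i a + s * fr i z + q zs" by simp
      then show "s * (fr i a - fr i z) \<le> q (a + s *\<^sub>R (z - a)) - q a"
        unfolding zs_def[symmetric] by (simp add: algebra_simps)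
    qed
    then have "fr i a - fr i z \<le> (z - a) \<bullet> w
        + \<rho> * (bregman phi z (y t i) - bregman phi a (y t i) - bregman phi z a)
        + \<delta> i * (bregman (vphi i) z (x t i) - bregman (vphi i) a (x t i) - bregman (vphi i) z a)"
      by (simp only: three_point)
    moreover have "Lm m P (\<nu> t) i = w" by (simp add: Lm_def Pm_def w_def)
    ultimately show ?thesis by (simp add: a_def z_def)
  qed
  have yVI: "bregman phi (xs i) (y t i) \<le> (\<Sum>j<m. P i j * bregman phi (xs i) (x t j))
                                        - (\<Sum>j<m. P i j * bregman phi (y t i) (x t j))"
    if i: "i < m" for i t
  proof -
    define a where "a = y t i"
    define z where "z = xs i"
    define q where "q u = (\<Sum>j<m. P i j * bregman phi u (x t j))" for u
    have aXD: "a \<in> X \<inter> D" using yin[OF i] by (simp add: a_def)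
    have zXD: "z \<in> X \<inter> D" using xsin[OF i] by (simp add: z_def)
    have qd: "(q has_derivative (\<lambda>h. \<Sum>j<m. P i j * ((grad phi a - grad phi (x t j)) \<bullet> h))) (at a)"
      unfolding q_def
      by (intro has_derivative_sum has_derivative_mult_right bregman_deriv) (use phidiff aXD in auto)
    have "0 \<le> (\<Sum>j<m. P i j * ((grad phi a - grad phi (x t j)) \<bullet> (z - a)))"
    proof (rule dir_lower[OF qd])
      fix s :: real assume s: "0 < s" "s < 1"
      have zs': "a + s *\<^sub>R (z - a) = (1 - s) *\<^sub>R a + s *\<^sub>R z" by (simp add: algebra_simps)
      have zsXD: "a + s *\<^sub>R (z - a) \<in> X \<inter> D" unfolding zs' using cXD aXD zXD s by (intro convexD) auto
      have "q a \<le> q (a + s *\<^sub>R (z - a))" using y_step[rule_format, OF i] zsXD unfolding q_def a_def by blast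
      then show "s * 0 \<le> q (a + s *\<^sub>R (z - a)) - q a" by simp
    qed
    also have "\<dots> = (\<Sum>j<m. P i j * (bregman phi z (x t j) - bregman phi a (x t j) - bregman phi z a))"
      by (simp only: three_point)
    also have "\<dots> = (\<Sum>j<m. P i j * bregman phi z (x t j)) - (\<Sum>j<m. P i j * bregman phi a (x t j))
                    - (\<Sum>j<m. P i j) * bregman phi z a"
      by (simp add: right_diff_distrib sum_subtractf sum_distrib_right)
    finally show ?thesis using rs i by (simp add: a_def z_def)
  qed
  define a where "a t = Lm m P (x t)" for t
  have Yfact: "(\<Sum>i<m. bregman phi (xs i) (y t i)) + \<kappa>/2 * ip m (a t) (a t)
      \<le> (\<Sum>i<m. bregman phi (xs i) (x t i))" for t
  proof -
    have s1: "(\<Sum>i<m. bregman phi (xs i) (y t i)) \<le> (\<Sum>i<m. (\<Sum>j<m. P i j * bregman phi (xs i) (x t j))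
              - (\<Sum>j<m. P i j * bregman phi (y t i) (x t j)))"
      by (rule sum_mono) (use yVI in auto)
    have s1': "(\<Sum>i<m. (\<Sum>j<m. P i j * bregman phi (xs i) (x t j)) - (\<Sum>j<m. P i j * bregman phi (y t i) (x t j)))
       = (\<Sum>i<m. \<Sum>j<m. P i j * bregman phi (xs i) (x t j)) - (\<Sum>i<m. \<Sum>j<m. P i j * bregman phi (y t i) (x t j))"
      by (rule sum_subtractf)
    have s2: "(\<Sum>i<m. \<Sum>j<m. P i j * bregman phi (xs i) (x t j)) = (\<Sum>j<m. bregman phi (xs j) (x t j))"
      using consensus_sum[OF P(1) P(2) Pxs, where g="\<lambda>v j. bregman phi v (x t j)"] by simp
    have s3: "\<kappa>/2 * ip m (a t) (a t) \<le> (\<Sum>i<m. \<Sum>j<m. P i j * bregman phi (y t i) (x t j))"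
    proof -
      have "ip m (a t) (a t) \<le> ip m (x t) (x t) - ip m (Pm m P (x t)) (Pm m P (x t))"
        unfolding a_def by (rule key_PL[OF P(1) P(2) P(4)])
      also have "\<dots> \<le> (\<Sum>i<m. \<Sum>j<m. P i j * (norm (y t i - x t j))\<^sup>2)"
        by (rule bary_bound[OF P(1) P(2)])
      finally have h: "\<kappa>/2 * ip m (a t) (a t) \<le> \<kappa>/2 * (\<Sum>i<m. \<Sum>j<m. P i j * (norm (y t i - x t j))\<^sup>2)"
        using \<kappa>0 by (intro mult_left_mono) auto
      also have "\<dots> = (\<Sum>i<m. \<Sum>j<m. P i j * (\<kappa>/2 * (norm (y t i - x t j))\<^sup>2))"
        by (simp add: sum_distrib_left mult_ac)
      also have "\<dots> \<le> (\<Sum>i<m. \<Sum>j<m. P i j * bregman phi (y t i) (x t j))"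
        by (intro sum_mono mult_left_mono Blow yin xin) (use P0 in auto)
      finally show ?thesis .
    qed
    show ?thesis using s1 s1' s2 s3 by linarith
  qed
  have Lower: "- ip m nus (a (Suc t)) \<le> (\<Sum>i<m. fr i (x (Suc t) i) - fr i (xs i))" for t
  proof -
    have each: "- (Lm m P nus i \<bullet> (x (Suc t) i - xs i)) \<le> fr i (x (Suc t) i) - fr i (xs i)"
      if i: "i < m" for i
    proof -
      obtain g where g: "g \<in> normal_cone X (xs i)"
        and sg: "- nus i + (\<Sum>j<m. P i j *\<^sub>R nus j) - g \<in> subdiff (f i) (xs i)"
        using opt(3) i by blast
      have "f i (xs i) + ereal ((- nus i + (\<Sum>j<m. P i j *\<^sub>R nus j) - g) \<bullet> (x (Suc t) i - xs i))
            \<le> f i (x (Suc t) i)"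
        using sg by (simp add: subdiff_def)
      then have h1: "fr i (xs i) + (- nus i + (\<Sum>j<m. P i j *\<^sub>R nus j) - g) \<bullet> (x (Suc t) i - xs i)
            \<le> fr i (x (Suc t) i)"
        using fxs_fin[OF i] fx_fin[OF i, of t] by simp
      have h2: "0 \<le> g \<bullet> (xs i - x (Suc t) i)"
        using g xin[OF i, of "Suc t"] unfolding normal_cone_def by blast
      have e: "(- nus i + (\<Sum>j<m. P i j *\<^sub>R nus j) - g) \<bullet> (x (Suc t) i - xs i)
          = - (Lm m P nus i \<bullet> (x (Suc t) i - xs i)) - g \<bullet> (x (Suc t) i - xs i)"
        by (simp add: Lm_def Pm_def inner_diff_left inner_add_left)
      have e2: "g \<bullet> (xs i - x (Suc t) i) = - (g \<bullet> (x (Suc t) i - xs i))"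
        by (simp add: inner_diff_right)
      show ?thesis using h1 h2 e e2 by linarith
    qed
    have "(\<Sum>i<m. - (Lm m P nus i \<bullet> (x (Suc t) i - xs i))) \<le> (\<Sum>i<m. fr i (x (Suc t) i) - fr i (xs i))"
      by (rule sum_mono) (use each in auto)
    moreover have "(\<Sum>i<m. - (Lm m P nus i \<bullet> (x (Suc t) i - xs i)))
        = - ip m (Lm m P nus) (\<lambda>i. x (Suc t) i - xs i)"
      by (simp add: ip_def sum_negf)
    moreover have "ip m (Lm m P nus) (\<lambda>i. x (Suc t) i - xs i) = ip m nus (a (Suc t))"
    proof -
      have e1: "ip m (Lm m P nus) (\<lambda>i. x (Suc t) i - xs i) = ip m (Lm m P nus) (x (Suc t)) - ip m (Lm m P nus) xs"
        by (rule ip_diff_right)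
      have e2: "ip m (Lm m P nus) (x (Suc t)) = ip m nus (a (Suc t))"
        unfolding a_def by (rule ip_Lm[OF P(1), symmetric])
      have e3: "ip m (Lm m P nus) xs = 0"
        using ip_Lm[OF P(1), where u=nus and v=xs] ip_sym[of m nus "Lm m P xs"] ip_zero_left[OF Lxs0, where v=nus] by simp
      show ?thesis using e1 e2 e3 by simp
    qed
    ultimately show ?thesis by linarith
  qed
  define \<Phi> where "\<Phi> l t = 1/(2*\<tau>) * ip m (\<lambda>i. \<nu> t i - l i) (\<lambda>i. \<nu> t i - l i)
      + \<rho> * (\<Sum>i<m. bregman phi (xs i) (y t i)) + (\<Sum>i<m. \<delta> i * bregman (vphi i) (xs i) (x t i))"
    for l :: "nat \<Rightarrow> real^'n" and t
  define F where "F t = (\<Sum>i<m. fr i (x (Suc t) i) - fr i (xs i))" for t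
  have nu': "\<nu> (Suc t) i = \<nu> t i + \<tau> *\<^sub>R a (Suc t) i" if "i < m" for t i
    using nu_step that by (simp add: a_def Lm_def Pm_def scaleR_diff_right)
  have step: "F t + ip m l (a (Suc t)) + \<rho> * \<gamma> / 2 * ip m (a (Suc t)) (a (Suc t))
      \<le> \<Phi> l t - \<Phi> l (Suc t)" for l t
  proof -
    define A where "A = a (Suc t)"
    define XX where "XX = ip m A A"
    define Q0 where "Q0 = ip m (\<lambda>i. \<nu> t i - l i) (\<lambda>i. \<nu> t i - l i)"
    define Q1 where "Q1 = ip m (\<lambda>i. \<nu> (Suc t) i - l i) (\<lambda>i. \<nu> (Suc t) i - l i)"
    define S1 where "S1 = (\<Sum>i<m. bregman phi (xs i) (y t i))"
    define S2 where "S2 = (\<Sum>i<m. bregman phi (x (Suc t) i) (y t i))"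
    define S3 where "S3 = (\<Sum>i<m. bregman phi (xs i) (x (Suc t) i))"
    define S1' where "S1' = (\<Sum>i<m. bregman phi (xs i) (y (Suc t) i))"
    define D1 where "D1 = (\<Sum>i<m. \<delta> i * bregman (vphi i) (xs i) (x t i))"
    define D2 where "D2 = (\<Sum>i<m. \<delta> i * bregman (vphi i) (x (Suc t) i) (x t i))"
    define D3 where "D3 = (\<Sum>i<m. \<delta> i * bregman (vphi i) (xs i) (x (Suc t) i))"
    define E where "E = (\<Sum>i<m. (xs i - x (Suc t) i) \<bullet> Lm m P (\<nu> t) i)"
    have h1: "F t \<le> E + \<rho> * S1 - \<rho> * S2 - \<rho> * S3 + D1 - D2 - D3"
    proof -
      have "F t \<le> (\<Sum>i<m. (xs i - x (Suc t) i) \<bullet> Lm m P (\<nu> t) i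
          + \<rho> * (bregman phi (xs i) (y t i) - bregman phi (x (Suc t) i) (y t i) - bregman phi (xs i) (x (Suc t) i))
          + \<delta> i * (bregman (vphi i) (xs i) (x t i) - bregman (vphi i) (x (Suc t) i) (x t i)
                 - bregman (vphi i) (xs i) (x (Suc t) i)))"
        unfolding F_def by (rule sum_mono) (use xVI in auto)
      also have "\<dots> = (\<Sum>i<m. (xs i - x (Suc t) i) \<bullet> Lm m P (\<nu> t) i
          + \<rho> * bregman phi (xs i) (y t i) - \<rho> * bregman phi (x (Suc t) i) (y t i) - \<rho> * bregman phi (xs i) (x (Suc t) i)
          + \<delta> i * bregman (vphi i) (xs i) (x t i) - \<delta> i * bregman (vphi i) (x (Suc t) i) (x t i)
          - \<delta> i * bregman (vphi i) (xs i) (x (Suc t) i))"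
        by (intro sum.cong refl) (simp add: right_diff_distrib)
      also have "\<dots> = E + \<rho> * S1 - \<rho> * S2 - \<rho> * S3 + D1 - D2 - D3"
        unfolding E_def S1_def S2_def S3_def D1_def D2_def D3_def
        by (simp only: sum.distrib sum_subtractf sum_distrib_left)
      finally show ?thesis .
    qed
    have h2: "E = - ip m A (\<nu> t)"
    proof -
      have e0: "E = ip m (\<lambda>i. xs i - x (Suc t) i) (Lm m P (\<nu> t))" by (simp add: E_def ip_def)
      have e1: "ip m xs (Lm m P (\<nu> t)) = 0"
        using ip_Lm[OF P(1), where u=xs and v="\<nu> t"] ip_zero_left[OF Lxs0, where v="\<nu> t"] by simp
      have e2: "ip m (x (Suc t)) (Lm m P (\<nu> t)) = ip m A (\<nu> t)"
        unfolding A_def a_def by (rule ip_Lm[OF P(1)])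
      show ?thesis using e0 ip_diff_left[of m xs "x (Suc t)" "Lm m P (\<nu> t)"] e1 e2 by simp
    qed
    have h3: "- ip m A (\<nu> t) + ip m l A = (Q0 - Q1) / (2*\<tau>) + \<tau>/2 * XX"
    proof -
      have "- ip m A (\<lambda>i. \<nu> t i - l i) = - ip m A (\<nu> t) + ip m l A"
        using ip_diff_right[of m A "\<nu> t" l] ip_sym[of m l A] by simp
      moreover have "- ip m A (\<lambda>i. \<nu> t i - l i) = (Q0 - Q1) / (2*\<tau>) + \<tau>/2 * XX"
        unfolding Q0_def Q1_def XX_def A_def
        by (rule dual_id[where \<nu>'="\<nu> (Suc t)" and \<nu>="\<nu> t" and a="a (Suc t)" and l=l and m=m, OF par(1) nu'])
      ultimately show ?thesis by simp
    qed
    have h4: "S1' + \<kappa>/2 * XX \<le> S3" using Yfact[of "Suc t"] by (simp add: S1'_def S3_def XX_def A_def)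
    have h5: "0 \<le> S2" unfolding S2_def by (intro sum_nonneg Bnn xin yin) auto
    have h6: "0 \<le> D2" unfolding D2_def
    proof (intro sum_nonneg)
      fix i assume "i \<in> {..<m}"
      then have i: "i < m" by simp
      have "0 \<le> bregman (vphi i) (x (Suc t) i) (x t i)"
        using Vnn[OF i] xin[OF i, of "Suc t"] xin[OF i, of t] by simp
      then show "0 \<le> \<delta> i * bregman (vphi i) (x (Suc t) i) (x t i)"
        using par(3) i by simp
    qed
    have XX0: "0 \<le> XX" unfolding XX_def by (rule ip_self_ge0)
    have h7: "(\<tau>/2 - \<rho>*\<kappa>/2) * XX \<le> (- (\<rho>*\<gamma>/2)) * XX"
      using tau' XX0 by (intro mult_right_mono) (simp_all add: algebra_simps)
    have h8: "\<rho> * (S1' + \<kappa>/2 * XX) \<le> \<rho> * S3" using h4 par(2) by (intro mult_left_mono) auto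
    have h9: "0 \<le> \<rho> * S2" using h5 par(2) by simp
    have \<Phi>t: "\<Phi> l t = 1/(2*\<tau>) * Q0 + \<rho> * S1 + D1" by (simp add: \<Phi>_def Q0_def S1_def D1_def)
    have \<Phi>s: "\<Phi> l (Suc t) = 1/(2*\<tau>) * Q1 + \<rho> * S1' + D3" by (simp add: \<Phi>_def Q1_def S1'_def D3_def)
    have qq: "(Q0 - Q1) / (2*\<tau>) = 1/(2*\<tau>) * Q0 - 1/(2*\<tau>) * Q1" by (simp add: diff_divide_distrib)
    have e7: "(\<tau>/2 - \<rho>*\<kappa>/2) * XX = \<tau>/2 * XX - \<rho> * (\<kappa>/2 * XX)" by (simp add: algebra_simps)
    have e7': "(- (\<rho>*\<gamma>/2)) * XX = - (\<rho> * \<gamma> / 2 * XX)" by simp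
    have e8: "\<rho> * (S1' + \<kappa>/2 * XX) = \<rho> * S1' + \<rho> * (\<kappa>/2 * XX)" by (simp add: algebra_simps)
    show ?thesis
      using h1 h2 h3 h6 h7 h8 h9 \<Phi>t \<Phi>s qq e7 e7' e8 unfolding A_def[symmetric] XX_def[symmetric]
      by linarith
  qed
  have \<Phi>nn: "0 \<le> \<Phi> l t" for l t
  proof -
    have "0 \<le> 1/(2*\<tau>) * ip m (\<lambda>i. \<nu> t i - l i) (\<lambda>i. \<nu> t i - l i)"
      using par(1) ip_self_ge0[of m "\<lambda>i. \<nu> t i - l i"] by simp
    moreover have "0 \<le> \<rho> * (\<Sum>i<m. bregman phi (xs i) (y t i))"
      using par(2) by (intro mult_nonneg_nonneg sum_nonneg Bnn xsin yin) auto
    moreover have "0 \<le> (\<Sum>i<m. \<delta> i * bregman (vphi i) (xs i) (x t i))"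
    proof (intro sum_nonneg)
      fix i assume "i \<in> {..<m}"
      then have i: "i < m" by simp
      have "0 \<le> bregman (vphi i) (xs i) (x t i)"
        using Vnn[OF i] xsin[OF i] xin[OF i, of t] by simp
      then show "0 \<le> \<delta> i * bregman (vphi i) (xs i) (x t i)" using par(3) i by simp
    qed
    ultimately show ?thesis unfolding \<Phi>_def by linarith
  qed
  have tele: "(\<Sum>t<T. F t + ip m l (a (Suc t))) + \<rho> * \<gamma> / 2 * (\<Sum>t<T. ip m (a (Suc t)) (a (Suc t)))
      \<le> \<Phi> l 0" for l
  proof -
    have "(\<Sum>t<T. F t + ip m l (a (Suc t)) + \<rho> * \<gamma> / 2 * ip m (a (Suc t)) (a (Suc t)))
        \<le> (\<Sum>t<T. \<Phi> l t - \<Phi> l (Suc t))"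
      by (rule sum_mono) (rule step)
    also have "\<dots> = \<Phi> l 0 - \<Phi> l T" by (rule sum_lessThan_telescope')
    finally have h: "(\<Sum>t<T. F t + ip m l (a (Suc t)) + \<rho> * \<gamma> / 2 * ip m (a (Suc t)) (a (Suc t)))
        \<le> \<Phi> l 0 - \<Phi> l T" .
    have e: "(\<Sum>t<T. F t + ip m l (a (Suc t)) + \<rho> * \<gamma> / 2 * ip m (a (Suc t)) (a (Suc t)))
        = (\<Sum>t<T. F t + ip m l (a (Suc t))) + \<rho> * \<gamma> / 2 * (\<Sum>t<T. ip m (a (Suc t)) (a (Suc t)))"
      by (simp add: sum.distrib sum_distrib_left)
    show ?thesis using h e \<Phi>nn[of l T] by linarith
  qed
  have T0: "real T > 0" using T by simp
  have reidx: "(\<Sum>t\<in>{1..T}. g t) = (\<Sum>t<T. g (Suc t))" for g :: "nat \<Rightarrow> real"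
    using sum.atLeast1_atMost_eq[of g T] by simp
  have fsum1: "(\<Sum>t<T. F t) \<le> \<rho> * (\<Sum>i<m. bregman phi (xs i) (y 0 i))
      + (\<Sum>i<m. \<delta> i * bregman (vphi i) (xs i) (x 0 i))"
  proof -
    have z1: "ip m (\<lambda>i. 0) v = 0" for v :: "nat \<Rightarrow> real^'n" by (simp add: ip_def)
    have z2: "ip m (\<nu> 0) (\<nu> 0) = 0" using init(2) by (simp add: ip_def)
    have nn: "0 \<le> \<rho> * \<gamma> / 2 * (\<Sum>t<T. ip m (a (Suc t)) (a (Suc t)))"
      using par(2) gamma(1) by (intro mult_nonneg_nonneg sum_nonneg ip_self_ge0) auto
    have "(\<Sum>t<T. F t + ip m (\<lambda>i. 0) (a (Suc t))) = (\<Sum>t<T. F t)" using z1 by simp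
    moreover have "\<Phi> (\<lambda>i. 0) 0 = \<rho> * (\<Sum>i<m. bregman phi (xs i) (y 0 i))
        + (\<Sum>i<m. \<delta> i * bregman (vphi i) (xs i) (x 0 i))"
      unfolding \<Phi>_def using z2 by simp
    ultimately show ?thesis using tele[of "\<lambda>i. 0"] nn by linarith
  qed
  define xbar where "xbar i = (1 / real T) *\<^sub>R (\<Sum>t\<in>{1..T}. x t i)" for i
  have J: "f i (xbar i) \<le> ereal ((1 / real T) * (\<Sum>t\<in>{1..T}. fr i (x t i)))" if i: "i < m" for i
  proof -
    have "f i ((1 / real (card {1..T})) *\<^sub>R (\<Sum>t\<in>{1..T}. x t i))
        \<le> ereal ((1 / real (card {1..T})) * (\<Sum>t\<in>{1..T}. fr i (x t i)))"
    proof (rule epi_jensen)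
      show "convex_fun (f i)" using f i by blast
      show "finite {1..T}" by simp
      show "{1..T} \<noteq> {}" using T by simp
      fix t assume "t \<in> {1..T}"
      then obtain t' where "t = Suc t'" by (cases t) auto
      then show "f i (x t i) = ereal (fr i (x t i))" using fx_fin[OF i, of t'] by simp
    qed
    then show ?thesis by (simp add: xbar_def)
  qed
  have c1: "(\<Sum>i<m. f i (xbar i)) - (\<Sum>i<m. f i (xs i))
      \<le> ereal (1 / real T * (\<rho> * (\<Sum>i<m. bregman phi (xs i) (y 0 i))
                     + (\<Sum>i<m. \<delta> i * bregman (vphi i) (xs i) (x 0 i))))"
  proof -
    have s1: "(\<Sum>i<m. f i (xbar i)) \<le> ereal (\<Sum>i<m. (1 / real T) * (\<Sum>t\<in>{1..T}. fr i (x t i)))"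
    proof -
      have "(\<Sum>i<m. f i (xbar i)) \<le> (\<Sum>i<m. ereal ((1 / real T) * (\<Sum>t\<in>{1..T}. fr i (x t i))))"
        by (rule sum_mono) (use J in auto)
      then show ?thesis by simp
    qed
    have s2: "(\<Sum>i<m. f i (xs i)) = ereal (\<Sum>i<m. fr i (xs i))"
    proof -
      have "(\<Sum>i<m. f i (xs i)) = (\<Sum>i<m. ereal (fr i (xs i)))"
        by (rule sum.cong) (use fxs_fin in auto)
      then show ?thesis by simp
    qed
    have sw: "(\<Sum>i<m. \<Sum>t\<in>{1..T}. fr i (x t i)) = (\<Sum>t\<in>{1..T}. \<Sum>i<m. fr i (x t i))"
      by (rule sum.swap)
    have rd: "(\<Sum>t\<in>{1..T}. \<Sum>i<m. fr i (x t i)) = (\<Sum>t<T. \<Sum>i<m. fr i (x (Suc t) i))"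
      by (rule reidx)
    have s3a: "(\<Sum>i<m. (1 / real T) * (\<Sum>t\<in>{1..T}. fr i (x t i)))
        = (1 / real T) * (\<Sum>t<T. \<Sum>i<m. fr i (x (Suc t) i))"
      unfolding sum_distrib_left[symmetric] sw rd ..
    have fF: "(\<Sum>t<T. F t) = (\<Sum>t<T. \<Sum>i<m. fr i (x (Suc t) i)) - real T * (\<Sum>i<m. fr i (xs i))"
      by (simp add: F_def sum_subtractf)
    have s3: "(\<Sum>i<m. (1 / real T) * (\<Sum>t\<in>{1..T}. fr i (x t i))) - (\<Sum>i<m. fr i (xs i))
        = 1 / real T * (\<Sum>t<T. F t)"
      unfolding s3a fF using T0 by (simp add: right_diff_distrib)
    have "(\<Sum>i<m. f i (xbar i)) - (\<Sum>i<m. f i (xs i))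
        \<le> ereal (\<Sum>i<m. (1 / real T) * (\<Sum>t\<in>{1..T}. fr i (x t i))) - ereal (\<Sum>i<m. fr i (xs i))"
      unfolding s2 by (rule ereal_minus_mono[OF s1 order_refl])
    also have "\<dots> = ereal (1 / real T * (\<Sum>t<T. F t))" using s3 by simp
    also have "\<dots> \<le> ereal (1 / real T * (\<rho> * (\<Sum>i<m. bregman phi (xs i) (y 0 i))
                     + (\<Sum>i<m. \<delta> i * bregman (vphi i) (xs i) (x 0 i))))"
      using fsum1 T0 by (simp add: divide_right_mono)
    finally show ?thesis .
  qed
  define V0 where "V0 = 1 / (2 * \<tau> * \<rho>) * (\<Sum>i<m. (norm (nus i - \<nu> 0 i))\<^sup>2)
              + (\<Sum>i<m. bregman phi (xs i) (y 0 i))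
              + (\<Sum>i<m. \<delta> i / \<rho> * bregman (vphi i) (xs i) (x 0 i))"
  have PhiV: "\<Phi> nus 0 = \<rho> * V0"
  proof -
    have e1: "ip m (\<lambda>i. \<nu> 0 i - nus i) (\<lambda>i. \<nu> 0 i - nus i) = (\<Sum>i<m. (norm (nus i - \<nu> 0 i))\<^sup>2)"
      by (simp add: ip_self_norm norm_minus_commute)
    have e2: "\<rho> * (1 / (2 * \<tau> * \<rho>) * N) = 1/(2*\<tau>) * N" for N using par(1,2) by simp
    have e3: "\<rho> * (\<Sum>i<m. \<delta> i / \<rho> * bregman (vphi i) (xs i) (x 0 i))
        = (\<Sum>i<m. \<delta> i * bregman (vphi i) (xs i) (x 0 i))"
      using par(2) by (simp add: sum_distrib_left)
    have "\<rho> * V0 = \<rho> * (1 / (2 * \<tau> * \<rho>) * (\<Sum>i<m. (norm (nus i - \<nu> 0 i))\<^sup>2))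
              + \<rho> * (\<Sum>i<m. bregman phi (xs i) (y 0 i))
              + \<rho> * (\<Sum>i<m. \<delta> i / \<rho> * bregman (vphi i) (xs i) (x 0 i))"
      unfolding V0_def by (simp add: distrib_left)
    then show ?thesis unfolding \<Phi>_def e1 e2 e3 by simp
  qed
  have sumA: "(\<Sum>t<T. ip m (a (Suc t)) (a (Suc t))) \<le> 2 * V0 / \<gamma>"
  proof -
    have Fnn: "0 \<le> (\<Sum>t<T. F t + ip m nus (a (Suc t)))"
    proof (intro sum_nonneg)
      fix t show "0 \<le> F t + ip m nus (a (Suc t))" using Lower[of t] unfolding F_def by linarith
    qed
    then have "\<rho> * (\<gamma> / 2 * (\<Sum>t<T. ip m (a (Suc t)) (a (Suc t)))) \<le> \<rho> * V0"
      using tele[of nus] PhiV by (simp add: mult.assoc)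
    then have "\<gamma> / 2 * (\<Sum>t<T. ip m (a (Suc t)) (a (Suc t))) \<le> V0"
      using par(2) by (rule mult_left_le_imp_le)
    then show ?thesis using gamma(1) by (simp add: field_simps)
  qed
  have Lbar: "xbar i - (\<Sum>j<m. P i j *\<^sub>R xbar j) = (1 / real T) *\<^sub>R (\<Sum>t\<in>{1..T}. a t i)"
    if i: "i < m" for i
  proof -
    have "(\<Sum>j<m. P i j *\<^sub>R xbar j) = (\<Sum>j<m. \<Sum>t\<in>{1..T}. (1 / real T) *\<^sub>R (P i j *\<^sub>R x t j))"
      unfolding xbar_def by (intro sum.cong refl) (simp add: scaleR_sum_right)
    also have "\<dots> = (\<Sum>t\<in>{1..T}. \<Sum>j<m. (1 / real T) *\<^sub>R (P i j *\<^sub>R x t j))" by (rule sum.swap)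
    also have "\<dots> = (1 / real T) *\<^sub>R (\<Sum>t\<in>{1..T}. Pm m P (x t) i)" by (simp add: Pm_def scaleR_sum_right)
    finally have h: "(\<Sum>j<m. P i j *\<^sub>R xbar j) = (1 / real T) *\<^sub>R (\<Sum>t\<in>{1..T}. Pm m P (x t) i)" .
    show ?thesis unfolding h by (simp add: xbar_def a_def Lm_def scaleR_diff_right sum_subtractf)
  qed
  have c2: "1 / 2 * (\<Sum>i<m. (norm (xbar i - (\<Sum>j<m. P i j *\<^sub>R xbar j)))\<^sup>2) \<le> V0 / (\<gamma> * real T)"
  proof -
    have "(\<Sum>i<m. (norm (xbar i - (\<Sum>j<m. P i j *\<^sub>R xbar j)))\<^sup>2)
        \<le> (\<Sum>i<m. (1 / real T) * (\<Sum>t\<in>{1..T}. (norm (a t i))\<^sup>2))"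
    proof (rule sum_mono)
      fix i assume "i \<in> {..<m}" then have i: "i < m" by simp
      have "(norm ((1 / real (card {1..T})) *\<^sub>R (\<Sum>t\<in>{1..T}. a t i)))\<^sup>2
          \<le> (1 / real (card {1..T})) * (\<Sum>t\<in>{1..T}. (norm (a t i))\<^sup>2)"
        by (rule norm2_jensen) (use T in auto)
      then show "(norm (xbar i - (\<Sum>j<m. P i j *\<^sub>R xbar j)))\<^sup>2
          \<le> (1 / real T) * (\<Sum>t\<in>{1..T}. (norm (a t i))\<^sup>2)"
        using Lbar[OF i] by simp
    qed
    also have "\<dots> = (1 / real T) * (\<Sum>i<m. \<Sum>t\<in>{1..T}. (norm (a t i))\<^sup>2)"
      by (rule sum_distrib_left[symmetric])
    also have "(\<Sum>i<m. \<Sum>t\<in>{1..T}. (norm (a t i))\<^sup>2) = (\<Sum>t\<in>{1..T}. \<Sum>i<m. (norm (a t i))\<^sup>2)"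
      by (rule sum.swap)
    also have "\<dots> = (\<Sum>t\<in>{1..T}. ip m (a t) (a t))" by (simp add: ip_self_norm)
    also have "\<dots> = (\<Sum>t<T. ip m (a (Suc t)) (a (Suc t)))" by (rule reidx)
    also have "(1 / real T) * \<dots> \<le> (1 / real T) * (2 * V0 / \<gamma>)"
      using sumA T0 by (intro mult_left_mono) auto
    finally have "(\<Sum>i<m. (norm (xbar i - (\<Sum>j<m. P i j *\<^sub>R xbar j)))\<^sup>2) \<le> (1 / real T) * (2 * V0 / \<gamma>)" .
    moreover have "1 / 2 * ((1 / real T) * (2 * V0 / \<gamma>)) = V0 / (\<gamma> * real T)"
      using gamma(1) T0 by (simp add: field_simps)
    ultimately show ?thesis by linarith
  qed
  show ?thesis using c1 c2 unfolding Let_def xbar_def V0_def by blast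
qed

end
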